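(* Let $a_1,a_2\in\mathbb{R}$ and $C>0$, and let $$R=\begin{pmatrix} 1 & a_1 \\ a_2 & 1 \end{pmatrix},\qquad S=\begin{pmatrix} 1 & Ca_1 \\ a_2/C & 1 \end{pmatrix}.$$ Then the Skorokhod problem with matrix $R$ has a unique solution for every driving function if and only if the Skorokhod problem with matrix $S$ has a unique solution for every driving function.
   Context: For $b=(b_1,b_2)\in\mathbb{R}^2$ write $b\ge 0$ if $b_1\ge 0$ and $b_2\ge 0$, and let $D=\{b\in\mathbb{R}^2: b\ge 0\}$. A driving function is a continuous function $f:[0,\infty)\to\mathbb{R}^2$ with $f(0)\ge 0$. Given a real $2\times 2$ matrix $R$ and a driving function $f$, a solution of the Skorokhod problem is a pair $(g,m)$ where (1) $g:[0,\infty)\to D$ is continuous; (2) $m=(m_1,m_2):[0,\infty)\to\mathbb{R}^2$ is continuous with $m(0)=0$ and each $m_j$ non-decreasing; (3) $g(t)=f(t)+Rm(t)$ for all $t\ge 0$; and (4) for $j=1,2$, $m_j$ increases only when $g_j=0$, i.e. $\int_0^\infty g_j(t)\,dm_j(t)=0$. "Unique solution" means there is exactly one such pair $(g,m)$. *)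

theory Defs
  imports "HOL-Analysis.Analysis"
begin

definition nonneg2 :: "real^2 \<Rightarrow> bool" where
  "nonneg2 b \<longleftrightarrow> b $ 1 \<ge> 0 \<and> b $ 2 \<ge> 0"

definition driving_fun :: "(real \<Rightarrow> real^2) \<Rightarrow> bool" where
  "driving_fun f \<longleftrightarrow> continuous_on {0..} f \<and> nonneg2 (f 0)"

text \<open>Condition (4): m_j increases only when g_j = 0, i.e. on every interval
 [s,t] where g_j stays strictly positive, m_j is constant.  For continuous g and
 continuous nondecreasing m this is equivalent to the Stieltjes condition
 int g_j dm_j = 0.\<close>
definition skorokhod_sol ::
  "real^2^2 \<Rightarrow> (real \<Rightarrow> real^2) \<Rightarrow> (real \<Rightarrow> real^2) \<Rightarrow> (real \<Rightarrow> real^2) \<Rightarrow> bool" where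
  "skorokhod_sol R f g m \<longleftrightarrow>
     continuous_on {0..} g \<and> (\<forall>t\<ge>0. nonneg2 (g t)) \<and>
     continuous_on {0..} m \<and> m 0 = 0 \<and>
     (\<forall>j. \<forall>s t. 0 \<le> s \<and> s \<le> t \<longrightarrow> m s $ j \<le> m t $ j) \<and>
     (\<forall>t\<ge>0. g t = f t + R *v m t) \<and>
     (\<forall>j. \<forall>s t. 0 \<le> s \<and> s \<le> t \<and> (\<forall>u\<in>{s..t}. g u $ j > 0) \<longrightarrow> m s $ j = m t $ j)"

text \<open>Solutions are functions on [0,oo); we identify functions agreeing there.\<close>
definition unique_solution :: "real^2^2 \<Rightarrow> (real \<Rightarrow> real^2) \<Rightarrow> bool" where
  "unique_solution R f \<longleftrightarrow>
     (\<exists>g m. skorokhod_sol R f g m \<and>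
        (\<forall>g' m'. skorokhod_sol R f g' m' \<longrightarrow> (\<forall>t\<ge>0. g' t = g t \<and> m' t = m t)))"

definition mat2 :: "real \<Rightarrow> real \<Rightarrow> real \<Rightarrow> real \<Rightarrow> real^2^2" where
  "mat2 a b c d = (\<chi> i j. if i = 1 then (if j = 1 then a else b) else (if j = 1 then c else d))"

end

theory Submission
  imports Defs
begin

definition sc :: "real \<Rightarrow> real^2 \<Rightarrow> real^2" where
  "sc C v = (\<chi> i. if i = 1 then v $ 1 else v $ 2 / C)"

lemma sc1[simp]: "sc C v $ 1 = v $ 1" by (simp add: sc_def)
lemma sc2[simp]: "sc C v $ 2 = v $ 2 / C" by (simp add: sc_def)

lemma sc_inv[simp]: "C > 0 \<Longrightarrow> sc C (sc (1/C) v) = v"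
  by (simp add: vec_eq_iff forall_2)

lemma sc_cont: "continuous_on S g \<Longrightarrow> continuous_on S (\<lambda>t. sc C (g t))"
  unfolding sc_def
  apply (intro continuous_on_vec_lambda)
  subgoal for i by (cases "i = 1") (auto simp: divide_inverse intro!: continuous_intros)
  done

lemma nonneg_sc: "C > 0 \<Longrightarrow> nonneg2 v \<Longrightarrow> nonneg2 (sc C v)"
  by (simp add: nonneg2_def)

lemma sc_pos: "C > 0 \<Longrightarrow> (sc C v $ j > 0) = (v $ j > 0)"
  using exhaust_2[of j] by (auto simp: zero_less_divide_iff)

lemma sc_le: "C > 0 \<Longrightarrow> (sc C v $ j \<le> sc C w $ j) = (v $ j \<le> w $ j)"
  using exhaust_2[of j] by (auto simp: divide_right_mono divide_le_cancel)

lemma sc_eq: "C > 0 \<Longrightarrow> (sc C v $ j = sc C w $ j) = (v $ j = w $ j)"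
  using exhaust_2[of j] by auto

lemma sc_mv: "C > 0 \<Longrightarrow> sc C (f + mat2 1 a1 a2 1 *v m) = sc C f + mat2 1 (C*a1) (a2/C) 1 *v sc C m"
  by (simp add: vec_eq_iff forall_2 matrix_vector_mult_def sum_2 mat2_def field_simps)

lemma driving_sc: "C > 0 \<Longrightarrow> driving_fun f \<Longrightarrow> driving_fun (\<lambda>t. sc C (f t))"
  unfolding driving_fun_def using sc_cont nonneg_sc by blast

lemma transfer:
  assumes C: "C > 0" and s: "skorokhod_sol (mat2 1 a1 a2 1) f g m"
  shows "skorokhod_sol (mat2 1 (C*a1) (a2/C) 1) (\<lambda>t. sc C (f t)) (\<lambda>t. sc C (g t)) (\<lambda>t. sc C (m t))"
proof -
  have m0: "sc C 0 = 0" by (simp add: vec_eq_iff forall_2)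
  show ?thesis using s unfolding skorokhod_sol_def
    using sc_cont[of _ g C] sc_cont[of _ m C] nonneg_sc[OF C] sc_le[OF C] sc_eq[OF C] sc_pos[OF C]
      sc_mv[OF C] m0
    by (simp) metis
qed

lemma one_dir:
  assumes C: "C > 0"
    and H: "\<forall>f. driving_fun f \<longrightarrow> unique_solution (mat2 1 a1 a2 1) f"
  shows "\<forall>f. driving_fun f \<longrightarrow> unique_solution (mat2 1 (C * a1) (a2 / C) 1) f"
proof (intro allI impI)
  fix f assume df: "driving_fun f"
  have C': "1/C > 0" using C by simp
  let ?f' = "\<lambda>t. sc (1/C) (f t)"
  have "driving_fun ?f'" using driving_sc[OF C' df] by simp
  with H obtain g m where gm: "skorokhod_sol (mat2 1 a1 a2 1) ?f' g m"
    and un: "\<forall>g' m'. skorokhod_sol (mat2 1 a1 a2 1) ?f' g' m' \<longrightarrow> (\<forall>t\<ge>0. g' t = g t \<and> m' t = m t)"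
    unfolding unique_solution_def by blast
  have s1: "skorokhod_sol (mat2 1 (C*a1) (a2/C) 1) f (\<lambda>t. sc C (g t)) (\<lambda>t. sc C (m t))"
    using transfer[OF C gm] C by simp
  show "unique_solution (mat2 1 (C * a1) (a2 / C) 1) f"
    unfolding unique_solution_def
  proof (rule exI, rule exI, rule conjI[OF s1], intro allI impI)
    fix g' m' and t :: real assume s': "skorokhod_sol (mat2 1 (C * a1) (a2 / C) 1) f g' m'" and t: "t \<ge> 0"
    have "skorokhod_sol (mat2 1 (1/C*(C*a1)) ((a2/C)/(1/C)) 1) ?f' (\<lambda>u. sc (1/C) (g' u)) (\<lambda>u. sc (1/C) (m' u))"
      using transfer[OF C' s'] .
    hence "skorokhod_sol (mat2 1 a1 a2 1) ?f' (\<lambda>u. sc (1/C) (g' u)) (\<lambda>u. sc (1/C) (m' u))"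
      using C by simp
    with un t have e: "sc (1/C) (g' t) = g t" "sc (1/C) (m' t) = m t" by blast+
    show "g' t = sc C (g t) \<and> m' t = sc C (m t)"
      using C by (simp flip: e)
  qed
qed

theorem lemma3p1:
  fixes a1 a2 C :: real
  assumes "C > 0"
  shows "(\<forall>f. driving_fun f \<longrightarrow> unique_solution (mat2 1 a1 a2 1) f) \<longleftrightarrow>
         (\<forall>f. driving_fun f \<longrightarrow> unique_solution (mat2 1 (C * a1) (a2 / C) 1) f)"
proof
  assume "\<forall>f. driving_fun f \<longrightarrow> unique_solution (mat2 1 a1 a2 1) f"
  then show "\<forall>f. driving_fun f \<longrightarrow> unique_solution (mat2 1 (C * a1) (a2 / C) 1) f"
    using one_dir[OF assms] by blast
next
  assume h: "\<forall>f. driving_fun f \<longrightarrow> unique_solution (mat2 1 (C * a1) (a2 / C) 1) f"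
  have "1/C > 0" using assms by simp
  from one_dir[OF this h] show "\<forall>f. driving_fun f \<longrightarrow> unique_solution (mat2 1 a1 a2 1) f"
    using assms by simp
qed

end
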